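(* Let $j\ge2$, let $H$ be a graph, let $G=\mathsf{TS}_j(H)$, and let $x_Q$ be the vertex of $G$ corresponding to a $j$-clique $Q=\{a_1,\dots,a_j\}$ of $H$. Put $S:=\bigcap_{i=1}^j N_H(a_i)$ and $X:=H[S]$. Then the subgraph of $G$ induced by the neighborhood $N_G(x_Q)$ is isomorphic to the graph obtained from $j$ disjoint copies $X_1,\dots,X_j$ of $X$ (writing $s_i$ for the copy of $s\in S$ in $X_i$) by adding, for each $s\in S$, all edges among $s_1,\dots,s_j$; there are no other edges between different copies.
   Context: All graphs are finite, simple, undirected; $N_H(v)$ is the set of neighbors of $v$ in $H$ and $H[S]$ the induced subgraph. A $k$-clique of a graph $H$ is a set of $k$ pairwise adjacent vertices. For a graph $H$ and integer $k\ge1$, the Token Sliding graph $\mathsf{TS}_k(H)$ has as vertices the $k$-cliques of $H$, and two $k$-cliques $A,B$ are adjacent iff $A\setminus B=\{u\}$, $B\setminus A=\{v\}$ for some vertices $u,v$ with $uv\in E(H)$. *)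

theory Defs
  imports Main
begin

definition simple_graph :: "'a set \<Rightarrow> ('a \<Rightarrow> 'a \<Rightarrow> bool) \<Rightarrow> bool" where
  "simple_graph V E \<longleftrightarrow> finite V \<and> (\<forall>u v. E u v \<longrightarrow> u \<in> V \<and> v \<in> V)
     \<and> (\<forall>u v. E u v \<longrightarrow> E v u) \<and> (\<forall>u. \<not> E u u)"

definition nbhd :: "'a set \<Rightarrow> ('a \<Rightarrow> 'a \<Rightarrow> bool) \<Rightarrow> 'a \<Rightarrow> 'a set" where
  "nbhd V E v = {u \<in> V. E v u}"

definition induced_edges :: "('a \<Rightarrow> 'a \<Rightarrow> bool) \<Rightarrow> 'a set \<Rightarrow> 'a \<Rightarrow> 'a \<Rightarrow> bool" where
  "induced_edges E S u v \<longleftrightarrow> u \<in> S \<and> v \<in> S \<and> E u v"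

definition cliques :: "'a set \<Rightarrow> ('a \<Rightarrow> 'a \<Rightarrow> bool) \<Rightarrow> nat \<Rightarrow> 'a set set" where
  "cliques V E k = {A. A \<subseteq> V \<and> finite A \<and> card A = k \<and>
                       (\<forall>u\<in>A. \<forall>v\<in>A. u \<noteq> v \<longrightarrow> E u v)}"

definition TS_vertices :: "'a set \<Rightarrow> ('a \<Rightarrow> 'a \<Rightarrow> bool) \<Rightarrow> nat \<Rightarrow> 'a set set" where
  "TS_vertices V E k = cliques V E k"

definition TS_edges :: "'a set \<Rightarrow> ('a \<Rightarrow> 'a \<Rightarrow> bool) \<Rightarrow> nat \<Rightarrow> 'a set \<Rightarrow> 'a set \<Rightarrow> bool" where
  "TS_edges V E k A B \<longleftrightarrow> A \<in> cliques V E k \<and> B \<in> cliques V E k \<and>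
     (\<exists>u v. A - B = {u} \<and> B - A = {v} \<and> E u v)"

definition graph_iso :: "'a set \<Rightarrow> ('a \<Rightarrow> 'a \<Rightarrow> bool) \<Rightarrow> 'b set \<Rightarrow> ('b \<Rightarrow> 'b \<Rightarrow> bool) \<Rightarrow> bool" where
  "graph_iso V1 E1 V2 E2 \<longleftrightarrow> (\<exists>f. bij_betw f V1 V2 \<and>
     (\<forall>u\<in>V1. \<forall>v\<in>V1. E1 u v \<longleftrightarrow> E2 (f u) (f v)))"

text \<open>j disjoint copies X_1..X_j of X = (S, E_X); vertex (s,i) is the copy s_i.
  Edges: copies of X-edges inside each X_i, plus all edges among s_1..s_j.\<close>
definition copies_vertices :: "'a set \<Rightarrow> nat \<Rightarrow> ('a \<times> nat) set" where
  "copies_vertices S j = S \<times> {1..j}"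

definition copies_edges :: "'a set \<Rightarrow> ('a \<Rightarrow> 'a \<Rightarrow> bool) \<Rightarrow> nat \<Rightarrow> ('a \<times> nat) \<Rightarrow> ('a \<times> nat) \<Rightarrow> bool" where
  "copies_edges S EXX j x y \<longleftrightarrow> x \<in> copies_vertices S j \<and> y \<in> copies_vertices S j \<and>
     ((snd x = snd y \<and> EXX (fst x) (fst y)) \<or> (fst x = fst y \<and> snd x \<noteq> snd y))"

end

theory Submission
  imports Defs
begin

lemma iso_sym:
  assumes "graph_iso V2 E2 V1 E1"
  shows "graph_iso V1 E1 V2 E2"
proof -
  obtain f where f: "bij_betw f V2 V1" "\<forall>u\<in>V2. \<forall>v\<in>V2. E2 u v \<longleftrightarrow> E1 (f u) (f v)"
    using assms unfolding graph_iso_def by blast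
  let ?g = "the_inv_into V2 f"
  have g: "bij_betw ?g V1 V2" using f(1) by (rule bij_betw_the_inv_into)
  have "\<forall>u\<in>V1. \<forall>v\<in>V1. E1 u v \<longleftrightarrow> E2 (?g u) (?g v)"
  proof (intro ballI)
    fix u v assume u: "u \<in> V1" and v: "v \<in> V1"
    have "f (?g u) = u" "f (?g v) = v"
      using f(1) u v by (auto simp: bij_betw_def f_the_inv_into_f)
    moreover have "?g u \<in> V2" "?g v \<in> V2" using g u v by (auto simp: bij_betw_def)
    ultimately show "E1 u v \<longleftrightarrow> E2 (?g u) (?g v)" using f(2) by metis
  qed
  then show ?thesis using g unfolding graph_iso_def by blast
qed

lemma edge_char:
  assumes "v \<notin> Q" "w \<notin> Q" "a \<in> Q" "b \<in> Q" "a \<noteq> b \<Longrightarrow> E b a" "\<And>x. \<not> E x x"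
  shows "(\<exists>u x. insert v (Q-{a}) - insert w (Q-{b}) = {u} \<and> insert w (Q-{b}) - insert v (Q-{a}) = {x} \<and> E u x)
     \<longleftrightarrow> (a=b \<and> E v w) \<or> (v=w \<and> a\<noteq>b)"
proof (cases "a = b")
  case True
  then show ?thesis
  proof (cases "v = w")
    case True
    then show ?thesis using \<open>a = b\<close> assms(6) by auto
  next
    case False
    have "insert v (Q-{a}) - insert w (Q-{b}) = {v}" "insert w (Q-{b}) - insert v (Q-{a}) = {w}"
      using False True assms(1,2) by auto
    then show ?thesis using True False by auto
  qed
next
  case False
  then show ?thesis
  proof (cases "v = w")
    case True
    have "insert v (Q-{a}) - insert w (Q-{b}) = {b}" "insert w (Q-{b}) - insert v (Q-{a}) = {a}"
      using False True assms(1-4) by auto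
    then show ?thesis using True False assms(5)[OF False] by auto
  next
    case ne: False
    have "b \<in> insert v (Q-{a}) - insert w (Q-{b})" "v \<in> insert v (Q-{a}) - insert w (Q-{b})"
      using False ne assms(1-4) by auto
    moreover have "b \<noteq> v" using assms by auto
    ultimately show ?thesis using False ne by auto
  qed
qed

theorem lemma3p15:
  fixes V :: "'a set" and E :: "'a \<Rightarrow> 'a \<Rightarrow> bool" and j :: nat and Q :: "'a set"
  assumes "simple_graph V E"
    and "j \<ge> 2"
    and "Q \<in> cliques V E j"
  defines "S \<equiv> (\<Inter>a\<in>Q. nbhd V E a)"
  defines "NQ \<equiv> {B \<in> TS_vertices V E j. TS_edges V E j Q B}"
  shows "graph_iso NQ (induced_edges (TS_edges V E j) NQ)
                   (copies_vertices S j) (copies_edges S (induced_edges E S) j)"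
proof -
  have sg: "finite V" "\<And>u v. E u v \<Longrightarrow> u \<in> V \<and> v \<in> V" "\<And>u v. E u v \<Longrightarrow> E v u" "\<And>u. \<not> E u u"
    using assms(1) unfolding simple_graph_def by blast+
  have Qc: "Q \<subseteq> V" "finite Q" "card Q = j" "\<And>u v. u \<in> Q \<Longrightarrow> v \<in> Q \<Longrightarrow> u \<noteq> v \<Longrightarrow> E u v"
    using assms(3) unfolding cliques_def by blast+
  obtain h0 where h0: "bij_betw h0 {0..<j} Q"
    using ex_bij_betw_nat_finite[OF Qc(2)] Qc(3) by blast
  define q where "q i = h0 (i - 1)" for i
  have sh: "bij_betw (\<lambda>i::nat. i - 1) {1..j} {0..<j}"
    unfolding bij_betw_def inj_on_def
  proof (intro conjI ballI impI)
    show "(\<lambda>i. i - 1) ` {1..j} = {0..<j}"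
    proof
      show "(\<lambda>i. i - 1) ` {1..j} \<subseteq> {0..<j}" by auto
      show "{0..<j} \<subseteq> (\<lambda>i. i - 1) ` {1..j}"
      proof
        fix x assume "x \<in> {0..<j}"
        then have "Suc x \<in> {1..j}" "x = Suc x - 1" by auto
        then show "x \<in> (\<lambda>i. i - 1) ` {1..j}" by blast
      qed
    qed
  qed auto
  have q: "bij_betw q {1..j} Q"
    unfolding q_def using bij_betw_trans[OF sh h0] by (simp add: comp_def)
  have Sdef: "\<And>v. v \<in> S \<longleftrightarrow> v \<in> V \<and> (\<forall>a\<in>Q. E a v)"
  proof -
    have "Q \<noteq> {}" using Qc(3) assms(2) by auto
    then show "\<And>v. v \<in> S \<longleftrightarrow> v \<in> V \<and> (\<forall>a\<in>Q. E a v)"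
      unfolding S_def nbhd_def by blast
  qed
  have SnQ: "\<And>v. v \<in> S \<Longrightarrow> v \<notin> Q" using Sdef sg(4) by blast
  define h where "h p = insert (fst p) (Q - {q (snd p)})" for p
  have hN: "insert v (Q - {a}) \<in> NQ" if v: "v \<in> S" and a: "a \<in> Q" for v a
  proof -
    have vQ: "v \<notin> Q" using SnQ v by blast
    have cl: "insert v (Q - {a}) \<in> cliques V E j"
      unfolding cliques_def
    proof (intro CollectI conjI ballI impI)
      show "insert v (Q - {a}) \<subseteq> V" using Sdef v Qc(1) by auto
      show "finite (insert v (Q - {a}))" using Qc(2) by simp
      show "card (insert v (Q - {a})) = j"
        using Qc(2,3) vQ a assms(2) by (simp add: card_Diff_singleton)
      fix x y assume "x \<in> insert v (Q - {a})" "y \<in> insert v (Q - {a})" "x \<noteq> y"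
      then show "E x y" using Qc(4) Sdef v sg(3) by auto
    qed
    have "Q - insert v (Q - {a}) = {a}" "insert v (Q - {a}) - Q = {v}" using a vQ by auto
    moreover have "E a v" using Sdef v a by blast
    ultimately have "TS_edges V E j Q (insert v (Q - {a}))"
      unfolding TS_edges_def using cl assms(3) by blast
    then show ?thesis unfolding NQ_def TS_vertices_def using cl by blast
  qed
  have Nh: "\<exists>v a. v \<in> S \<and> a \<in> Q \<and> B = insert v (Q - {a})" if B: "B \<in> NQ" for B
  proof -
    from B have Bc: "B \<in> cliques V E j" and "TS_edges V E j Q B"
      unfolding NQ_def TS_vertices_def by auto
    then obtain u v where uv: "Q - B = {u}" "B - Q = {v}" "E u v" unfolding TS_edges_def by blast
    have Beq: "B = insert v (Q - {u})" using uv by blast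
    have uQ: "u \<in> Q" using uv by blast
    have "v \<in> S" unfolding Sdef
    proof (intro conjI ballI)
      show "v \<in> V" using sg(2) uv(3) by blast
      fix a assume a: "a \<in> Q"
      show "E a v"
      proof (cases "a = u")
        case True then show ?thesis using uv by simp
      next
        case False
        then have "a \<in> B" "v \<in> B" "a \<noteq> v" using a uv by auto
        then show ?thesis using Bc unfolding cliques_def by blast
      qed
    qed
    then show ?thesis using Beq uQ by blast
  qed
  have hinj: "v = w \<and> a = b" if "insert v (Q - {a}) = insert w (Q - {b})" "v \<in> S" "w \<in> S" "a \<in> Q" "b \<in> Q" for v w a b
  proof -
    have "v \<notin> Q" "w \<notin> Q" using SnQ that by auto
    then have "insert v (Q - {a}) - Q = {v}" "insert w (Q - {b}) - Q = {w}"
      "Q - insert v (Q - {a}) = {a}" "Q - insert w (Q - {b}) = {b}" using that by auto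
    then show ?thesis using that(1) by auto
  qed
  have bij: "bij_betw h (copies_vertices S j) NQ"
    unfolding bij_betw_def
  proof
    show "inj_on h (copies_vertices S j)"
    proof (rule inj_onI)
      fix x y assume x: "x \<in> copies_vertices S j" and y: "y \<in> copies_vertices S j" and e: "h x = h y"
      have "q (snd x) \<in> Q" "q (snd y) \<in> Q" using x y q unfolding copies_vertices_def bij_betw_def by auto
      then have "fst x = fst y \<and> q (snd x) = q (snd y)"
        using hinj e x y unfolding h_def copies_vertices_def by auto
      moreover have "snd x \<in> {1..j}" "snd y \<in> {1..j}" using x y unfolding copies_vertices_def by auto
      ultimately show "x = y" using q unfolding bij_betw_def inj_on_def by (metis prod.expand)
    qed
    show "h ` copies_vertices S j = NQ"
    proof
      show "h ` copies_vertices S j \<subseteq> NQ"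
        using hN q unfolding h_def copies_vertices_def bij_betw_def by auto
      show "NQ \<subseteq> h ` copies_vertices S j"
      proof
        fix B assume "B \<in> NQ"
        then obtain v a where va: "v \<in> S" "a \<in> Q" "B = insert v (Q - {a})" using Nh by blast
        then obtain i where "i \<in> {1..j}" "a = q i" using q unfolding bij_betw_def by auto
        then have "(v, i) \<in> copies_vertices S j" "h (v, i) = B"
          using va unfolding copies_vertices_def h_def by auto
        then show "B \<in> h ` copies_vertices S j" by blast
      qed
    qed
  qed
  have edges: "\<forall>x\<in>copies_vertices S j. \<forall>y\<in>copies_vertices S j.
     copies_edges S (induced_edges E S) j x y \<longleftrightarrow> induced_edges (TS_edges V E j) NQ (h x) (h y)"
  proof (intro ballI)
    fix x y assume x: "x \<in> copies_vertices S j" and y: "y \<in> copies_vertices S j"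
    obtain v i where xi: "x = (v, i)" by fastforce
    obtain w k where yk: "y = (w, k)" by fastforce
    have vw: "v \<in> S" "w \<in> S" "i \<in> {1..j}" "k \<in> {1..j}"
      using x y xi yk unfolding copies_vertices_def by auto
    have qi: "q i \<in> Q" "q k \<in> Q" using vw q unfolding bij_betw_def by auto
    have qeq: "q i = q k \<longleftrightarrow> i = k" using vw bij_betw_imp_inj_on[OF q] by (simp add: inj_on_eq_iff)
    have hx: "h x \<in> NQ" "h y \<in> NQ" using hN[OF vw(1) qi(1)] hN[OF vw(2) qi(2)] unfolding h_def xi yk by simp_all
    have cl: "h x \<in> cliques V E j" "h y \<in> cliques V E j"
      using hx unfolding NQ_def TS_vertices_def by auto
    have Eqq: "E (q k) (q i)" if "i \<noteq> k" using Qc(4) qi qeq that by auto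
    have Evw: "induced_edges E S v w \<longleftrightarrow> E v w" using vw unfolding induced_edges_def by auto
    have "induced_edges (TS_edges V E j) NQ (h x) (h y) \<longleftrightarrow>
       (\<exists>u z. insert v (Q-{q i}) - insert w (Q-{q k}) = {u} \<and> insert w (Q-{q k}) - insert v (Q-{q i}) = {z} \<and> E u z)"
    proof -
      have "induced_edges (TS_edges V E j) NQ (h x) (h y) \<longleftrightarrow> TS_edges V E j (h x) (h y)"
        using hx unfolding induced_edges_def by blast
      also have "\<dots> \<longleftrightarrow> (\<exists>u z. h x - h y = {u} \<and> h y - h x = {z} \<and> E u z)"
        using cl unfolding TS_edges_def by blast
      finally show ?thesis unfolding h_def xi yk by simp
    qed
    also have "\<dots> \<longleftrightarrow> (q i = q k \<and> E v w) \<or> (v = w \<and> q i \<noteq> q k)"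
    proof (cases "i = k")
      case True
      show ?thesis
        by (rule edge_char) (use SnQ vw qi sg(4) True in auto)
    next
      case False
      show ?thesis
        by (rule edge_char) (use SnQ vw qi sg(4) Eqq[OF False] False qeq in auto)
    qed
    finally show "copies_edges S (induced_edges E S) j x y \<longleftrightarrow> induced_edges (TS_edges V E j) NQ (h x) (h y)"
      using x y qeq Evw unfolding copies_edges_def xi yk by auto
  qed
  have "graph_iso (copies_vertices S j) (copies_edges S (induced_edges E S) j)
          NQ (induced_edges (TS_edges V E j) NQ)"
    unfolding graph_iso_def using bij edges by blast
  then show ?thesis by (rule iso_sym)
qed

end
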